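(* Let $A$ be a symmetric finite collection of points of $[0,1]^2$, and let $x=(x_1,x_2)$ be an average fixed point of $A$. Then $x_1=x_2$.
   Context: A collection (multiset) $A=(a^k)_{k\in[n]}$ of points of $[0,1]^2$ is symmetric if for all $x_1,x_2$, $|\{k:a^k=(x_1,x_2)\}|=|\{k:a^k=(x_2,x_1)\}|$. For a finite nonempty multiset $B$, $\operatorname{avg}(B)$ is its arithmetic mean (with multiplicity). For $x\in[0,1]^2$: $A_{<,<}(x)=\{a\in A:a_1<x_1,a_2<x_2\}$ and $A_{\le,\le}(x)=\{a\in A:a_1\le x_1,a_2\le x_2\}$. A point $x$ is an average fixed point of $A$ if there exists a sub-multiset $B\subseteq A_{\le,\le}(x)\setminus A_{<,<}(x)$ such that $\operatorname{avg}\big((A\setminus A_{\le,\le}(x))\cup B\big)=x$. *)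

theory Defs
  imports Main "HOL-Library.Multiset" Complex_Main
begin

type_synonym pt = "real \<times> real"

definition in_unit_square :: "pt \<Rightarrow> bool" where
  "in_unit_square p \<longleftrightarrow> 0 \<le> fst p \<and> fst p \<le> 1 \<and> 0 \<le> snd p \<and> snd p \<le> 1"

definition symmetric_ms :: "pt multiset \<Rightarrow> bool" where
  "symmetric_ms A \<longleftrightarrow> (\<forall>x1 x2. count A (x1, x2) = count A (x2, x1))"

definition avg :: "pt multiset \<Rightarrow> pt" where
  "avg B = ((\<Sum>a\<in>#B. fst a) / real (size B), (\<Sum>a\<in>#B. snd a) / real (size B))"

definition A_lt_lt :: "pt multiset \<Rightarrow> pt \<Rightarrow> pt multiset" where
  "A_lt_lt A x = filter_mset (\<lambda>a. fst a < fst x \<and> snd a < snd x) A"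

definition A_le_le :: "pt multiset \<Rightarrow> pt \<Rightarrow> pt multiset" where
  "A_le_le A x = filter_mset (\<lambda>a. fst a \<le> fst x \<and> snd a \<le> snd x) A"

definition average_fixed_point :: "pt multiset \<Rightarrow> pt \<Rightarrow> bool" where
  "average_fixed_point A x \<longleftrightarrow>
     (\<exists>B. B \<subseteq># A_le_le A x - A_lt_lt A x \<and>
          (A - A_le_le A x) + B \<noteq> {#} \<and>
          avg ((A - A_le_le A x) + B) = x)"

end

theory Submission
  imports Defs
begin

lemma msum_count:
  fixes f :: "'a \<Rightarrow> real"
  assumes "finite S" "set_mset M \<subseteq> S"
  shows "(\<Sum>a\<in>#M. f a) = (\<Sum>p\<in>S. real (count M p) * f p)"
  using assms(2)
proof (induction M)
  case empty
  then show ?case by simp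
next
  case (add a M)
  have aS: "a \<in> S" using add.prems by auto
  have IH: "(\<Sum>a\<in>#M. f a) = (\<Sum>p\<in>S. real (count M p) * f p)"
    using add by auto
  have "(\<Sum>p\<in>S. real (count (add_mset a M) p) * f p)
      = (\<Sum>p\<in>S. real (count M p) * f p + (if p = a then f p else 0))"
    by (rule sum.cong) (auto simp: algebra_simps)
  also have "\<dots> = (\<Sum>p\<in>S. real (count M p) * f p) + f a"
    using aS assms(1) by (simp add: sum.distrib)
  finally show ?case using IH by simp
qed

definition sw :: "pt \<Rightarrow> pt" where "sw p = (snd p, fst p)"

lemma core:
  fixes u v :: "pt \<Rightarrow> real" and cA cD :: "pt \<Rightarrow> nat" and S :: "pt set"
  assumes fin: "finite S"
    and uv: "\<And>p. u (sw p) = v p" "\<And>p. v (sw p) = u p"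
    and swS: "\<And>p. p \<in> S \<Longrightarrow> sw p \<in> S"
    and symA: "\<And>p. cA (sw p) = cA p"
    and DA: "\<And>p. cD p \<le> cA p"
    and CD: "\<And>p. u p > y1 \<or> v p > y2 \<Longrightarrow> cD p = cA p"
    and BD: "\<And>p. cD p > 0 \<Longrightarrow> (u p > y1 \<or> v p > y2) \<or> (u p \<le> y1 \<and> v p \<le> y2 \<and> (u p = y1 \<or> v p = y2))"
    and inS: "\<And>p. p \<in> S \<Longrightarrow> cA p > 0"
    and ne: "\<exists>p\<in>S. cD p > 0"
    and E1: "(\<Sum>p\<in>S. real (cD p) * (u p - y1)) = 0"
    and E2: "(\<Sum>p\<in>S. real (cD p) * (v p - y2)) = 0"
    and lt: "y1 < y2"
  shows False
proof -
  have swsw: "\<And>p. sw (sw p) = p" by (simp add: sw_def)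
  have bij: "bij_betw sw S S"
    by (rule bij_betw_byWitness[where f'=sw]) (auto simp: swS swsw)
  have "(\<Sum>p\<in>S. real (cD p) * (v p - y2)) = (\<Sum>p\<in>S. real (cD (sw p)) * (v (sw p) - y2))"
    using sum.reindex_bij_betw[OF bij, of "\<lambda>p. real (cD p) * (v p - y2)"] by simp
  also have "\<dots> = (\<Sum>p\<in>S. real (cD (sw p)) * (u p - y2))" using uv by simp
  finally have E2': "(\<Sum>p\<in>S. real (cD (sw p)) * (u p - y2)) = 0" using E2 by simp
  define T where "T p = real (cD p) * (u p - y1) - real (cD (sw p)) * (u p - y2)" for p
  have Tsum: "(\<Sum>p\<in>S. T p) = 0"
    unfolding T_def using E1 E2' by (simp add: sum_subtractf)
  have Tpos: "T p \<ge> 0 \<and> (cA p > 0 \<and> u p > y1 \<longrightarrow> T p > 0)" for p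
  proof -
    have d': "cD (sw p) \<le> cA p" using DA[of "sw p"] symA[of p] by simp
    show ?thesis
    proof (cases "u p > y2")
      case True
      then have c: "cD p = cA p" using CD[of p] lt by auto
      have "real (cD (sw p)) * (u p - y2) \<le> real (cA p) * (u p - y2)"
        using d' True by (intro mult_right_mono) auto
      moreover have "real (cA p) * (u p - y1) - real (cA p) * (u p - y2) = real (cA p) * (y2 - y1)"
        by (simp add: algebra_simps)
      moreover have "cA p > 0 \<Longrightarrow> real (cA p) * (y2 - y1) > 0" using lt by simp
      ultimately show ?thesis unfolding T_def c using lt
        by (smt (verit) mult_nonneg_nonneg of_nat_0_le_iff)
    next
      case False
      note F = False
      show ?thesis
      proof (cases "u p > y1")
        case True
        then have c: "cD p = cA p" using CD[of p] lt by auto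
        have "real (cD (sw p)) * (u p - y2) \<le> 0"
          using F by (intro mult_nonneg_nonpos) auto
        moreover have "real (cA p) * (u p - y1) \<ge> 0" using True by simp
        moreover have "cA p > 0 \<Longrightarrow> real (cA p) * (u p - y1) > 0" using True by simp
        ultimately show ?thesis unfolding T_def c by linarith
      next
        case False
        then have ul: "u p \<le> y1" by simp
        have "T p \<ge> 0"
        proof (cases "v p > y1")
          case True
          then have "u (sw p) > y1" using uv by simp
          then have "cD (sw p) = cA (sw p)" using CD by blast
          then have ge: "cD p \<le> cD (sw p)" using DA[of p] symA[of p] by simp
          have "real (cD p) * (y1 - u p) \<le> real (cD (sw p)) * (y1 - u p)"
            using ge ul by (intro mult_right_mono) auto
          moreover have "real (cD (sw p)) * (y1 - u p) \<le> real (cD (sw p)) * (y2 - u p)"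
            using lt by (intro mult_left_mono) auto
          ultimately show ?thesis unfolding T_def by (simp add: algebra_simps)
        next
          case False
          show ?thesis
          proof (cases "cD p > 0")
            case True
            then have "u p = y1" using BD[of p] False lt ul by auto
            then show ?thesis unfolding T_def using lt
              by (simp add: mult_nonneg_nonpos)
          next
            case False
            then show ?thesis unfolding T_def using ul lt
              by (simp add: mult_nonneg_nonpos)
          qed
        qed
        then show ?thesis using ul by simp
      qed
    qed
  qed
  have allz: "\<forall>p\<in>S. T p = 0"
    using sum_nonneg_eq_0_iff[OF fin, of T] Tpos Tsum by auto
  have ule: "\<And>p. p \<in> S \<Longrightarrow> u p \<le> y1"
  proof -
    fix p assume pS: "p \<in> S"
    show "u p \<le> y1"
    proof (rule ccontr)
      assume "\<not> u p \<le> y1"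
      moreover have "cA p > 0" using inS pS by simp
      ultimately show False using Tpos[of p] allz pS by auto
    qed
  qed
  have vle: "\<And>p. p \<in> S \<Longrightarrow> v p < y2"
    using ule swS uv lt by (metis order.strict_trans1)
  obtain q where q: "q \<in> S" "cD q > 0" using ne by auto
  have "(\<Sum>p\<in>S. real (cD p) * (v p - y2)) < (\<Sum>p\<in>S. 0)"
  proof (rule sum_strict_mono_ex1[OF fin])
    show "\<forall>p\<in>S. real (cD p) * (v p - y2) \<le> 0"
    proof
      fix p assume "p \<in> S"
      then have "v p - y2 \<le> 0" using vle by (simp add: less_imp_le)
      then show "real (cD p) * (v p - y2) \<le> 0" by (simp add: mult_nonneg_nonpos)
    qed
    show "\<exists>p\<in>S. real (cD p) * (v p - y2) < 0"
      using q vle[of q] by (auto intro!: bexI[of _ q] mult_pos_neg)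
  qed
  then show False using E2 by simp
qed

theorem corollary1:
  fixes A :: "(real \<times> real) multiset" and x :: "real \<times> real"
  assumes "\<forall>a\<in>#A. in_unit_square a"
    and "symmetric_ms A"
    and "in_unit_square x"
    and "average_fixed_point A x"
  shows "fst x = snd x"
proof (rule ccontr)
  assume neq: "fst x \<noteq> snd x"
  obtain B where B: "B \<subseteq># A_le_le A x - A_lt_lt A x"
    and ne: "(A - A_le_le A x) + B \<noteq> {#}"
    and av: "avg ((A - A_le_le A x) + B) = x"
    using assms(4) unfolding average_fixed_point_def by blast
  define D where "D = (A - A_le_le A x) + B"
  define S where "S = set_mset A"
  have fin: "finite S" unfolding S_def by simp
  have symA: "\<And>p. count A (sw p) = count A p"
    using assms(2) unfolding symmetric_ms_def sw_def by (metis prod.collapse)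
  have swS: "\<And>p. p \<in> S \<Longrightarrow> sw p \<in> S"
    unfolding S_def using symA by (metis count_eq_zero_iff)
  have cntB: "count B p \<le> (if (fst p \<le> fst x \<and> snd p \<le> snd x) \<and> \<not> (fst p < fst x \<and> snd p < snd x) then count A p else 0)" for p
  proof -
    have "count B p \<le> count (A_le_le A x - A_lt_lt A x) p" using B by (rule mset_subset_eq_count)
    then show ?thesis unfolding A_le_le_def A_lt_lt_def by (auto split: if_splits)
  qed
  have cD: "count D p = (if fst p \<le> fst x \<and> snd p \<le> snd x then count B p else count A p)" for p
    using cntB[of p] unfolding D_def A_le_le_def by (auto split: if_splits)
  have DS: "set_mset D \<subseteq> S"
  proof
    fix p assume "p \<in># D"
    then have "count D p > 0" by simp
    moreover have "count D p \<le> count A p" using cD[of p] cntB[of p] by (auto split: if_splits)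
    ultimately have "count A p > 0" by linarith
    then show "p \<in> S" unfolding S_def by simp
  qed
  have szpos: "size D > 0" using ne unfolding D_def by (simp add: nonempty_has_size)
  have s1: "(\<Sum>a\<in>#D. fst a) = fst x * real (size D)"
    using av szpos unfolding avg_def D_def[symmetric] by (auto simp: field_simps)
  have s2: "(\<Sum>a\<in>#D. snd a) = snd x * real (size D)"
    using av szpos unfolding avg_def D_def[symmetric] by (auto simp: field_simps)
  have szS: "real (size D) = (\<Sum>p\<in>S. real (count D p))"
  proof -
    have "(\<Sum>a\<in>#D. (1::real)) = real (size D)" by (induction D) auto
    then show ?thesis using msum_count[OF fin DS, of "\<lambda>_. 1"] by simp
  qed
  have g: "(\<Sum>p\<in>S. real (count D p) * (f p - y)) = 0"
    if "(\<Sum>a\<in>#D. f a) = y * real (size D)" for f y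
  proof -
    have "(\<Sum>p\<in>S. real (count D p) * (f p - y)) =
        (\<Sum>p\<in>S. real (count D p) * f p) - y * (\<Sum>p\<in>S. real (count D p))"
      by (simp add: algebra_simps sum_subtractf sum_distrib_left)
    also have "\<dots> = 0" using that msum_count[OF fin DS, of f] szS by simp
    finally show ?thesis .
  qed
  have E1: "(\<Sum>p\<in>S. real (count D p) * (fst p - fst x)) = 0" using g[OF s1] .
  have E2: "(\<Sum>p\<in>S. real (count D p) * (snd p - snd x)) = 0" using g[OF s2] .
  have DA: "count D p \<le> count A p" for p using cD[of p] cntB[of p] by (auto split: if_splits)
  have inS: "\<And>p. p \<in> S \<Longrightarrow> count A p > 0" unfolding S_def by simp
  have nex: "\<exists>p\<in>S. count D p > 0"
  proof -
    obtain p where "p \<in># D" using ne unfolding D_def[symmetric] by blast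
    then show ?thesis using DS by auto
  qed
  have BD: "\<And>p. count D p > 0 \<Longrightarrow> (fst p > fst x \<or> snd p > snd x) \<or>
      (fst p \<le> fst x \<and> snd p \<le> snd x \<and> (fst p = fst x \<or> snd p = snd x))"
  proof -
    fix p assume pD: "count D p > 0"
    show "(fst p > fst x \<or> snd p > snd x) \<or>
      (fst p \<le> fst x \<and> snd p \<le> snd x \<and> (fst p = fst x \<or> snd p = snd x))"
    proof (cases "fst p \<le> fst x \<and> snd p \<le> snd x")
      case True
      with pD cD[of p] have cb: "count B p > 0" by simp
      have "\<not> (fst p < fst x \<and> snd p < snd x)"
      proof
        assume h: "fst p < fst x \<and> snd p < snd x"
        have "count B p \<le> 0" using cntB[of p] h by (simp only: if_False simp_thms)
        then show False using cb by simp
      qed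
      with True show ?thesis by auto
    next
      case False then show ?thesis by auto
    qed
  qed
  show False
  proof (cases "fst x < snd x")
    case True
    show False
      by (rule core[where u=fst and v=snd and cA="count A" and cD="count D" and S=S, OF fin _ _ swS symA DA _ BD inS nex E1 E2 True])
        (auto simp: sw_def cD)
  next
    case False
    then have lt: "snd x < fst x" using neq by simp
    show False
      apply (rule core[where u=snd and v=fst and cA="count A" and cD="count D" and S=S, OF fin _ _ swS symA DA _ _ inS nex E2 E1 lt])
      apply (simp_all add: sw_def)
      subgoal for p using cD[of p] by auto
      subgoal for p using BD[of p] by auto
      done
  qed
qed

end
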